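(* Suppose the p-values are conditionally super-uniform: for every $t$ with $\theta_t=0$, $\mathbb{P}(p_t\le U\mid\mathcal{F}_{t-1})\le U$ a.s. for every $\mathcal F_{t-1}$-measurable $[0,1]$-valued $U$. Fix $d\in(0,1]$ and let $\mathrm{mem\text{-}FDP}^*(t)=\sum_{j\in\mathcal{H}_0(t)}\frac{\alpha_j}{dR^{\mathrm d}_{j-1}+1}$. Then for every $t\ge1$: if $\mathbb{E}[\mathrm{mem\text{-}FDP}^*(t)]\le\alpha$, then $\mathrm{mem\text{-}FDR}(t)\le\alpha$.
   Context: Let $\alpha\in(0,1)$ be a target level. Hypotheses are indexed by $t=1,2,\dots$; $\theta_t\in\{0,1\}$ is a fixed (non-random) indicator with $\theta_t=0$ iff the $t$-th null hypothesis is true. $p_1,p_2,\dots$ are $[0,1]$-valued random variables (p-values). Testing levels $\alpha_1,\alpha_2,\dots$ are $[0,1]$-valued random variables and the decisions are $\delta_t=\mathbb{1}\{p_t\le\alpha_t\}$. Let $\mathcal{F}_t=\sigma(\delta_1,\dots,\delta_t)$, $\mathcal{F}_0$ trivial; each $\alpha_t$ is required to be $\mathcal{F}_{t-1}$-measurable. $\mathcal{H}_0(t)=\{j\le t:\theta_j=0\}$. For a decay parameter $d\in(0,1]$, $R^{\mathrm d}_t=\sum_{j=1}^t d^{t-j}\delta_j$ with $R^{\mathrm d}_0=0$, and $\mathrm{mem\text{-}FDR}(t)=\mathbb{E}\big[\sum_{j\in\mathcal{H}_0(t)}d^{t-j}\delta_j\big/R^{\mathrm d}_t\big]$ with the convention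 $0/0=0$. *)

theory Defs
  imports "HOL-Probability.Probability"
begin

definition decision :: "(nat \<Rightarrow> 'a \<Rightarrow> real) \<Rightarrow> (nat \<Rightarrow> 'a \<Rightarrow> real) \<Rightarrow> nat \<Rightarrow> 'a \<Rightarrow> real" where
  "decision p alpha t \<omega> = (if p t \<omega> \<le> alpha t \<omega> then 1 else 0)"

definition dec_filtration :: "'a measure \<Rightarrow> (nat \<Rightarrow> 'a \<Rightarrow> real) \<Rightarrow> nat \<Rightarrow> 'a measure" where
  "dec_filtration M \<delta> t =
     sigma (space M) {\<delta> j -` A \<inter> space M | j A. j \<in> {1..t} \<and> A \<in> sets (borel :: real measure)}"

definition H0 :: "(nat \<Rightarrow> nat) \<Rightarrow> nat \<Rightarrow> nat set" where
  "H0 \<theta> t = {j \<in> {1..t}. \<theta> j = 0}"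

definition decay_R :: "real \<Rightarrow> (nat \<Rightarrow> 'a \<Rightarrow> real) \<Rightarrow> nat \<Rightarrow> 'a \<Rightarrow> real" where
  "decay_R d \<delta> t \<omega> = (\<Sum>j=1..t. d ^ (t - j) * \<delta> j \<omega>)"

text \<open>mem-FDR(t); division by zero gives 0 in Isabelle, matching 0/0 = 0.\<close>
definition mem_FDR :: "'a measure \<Rightarrow> real \<Rightarrow> (nat \<Rightarrow> nat) \<Rightarrow> (nat \<Rightarrow> 'a \<Rightarrow> real) \<Rightarrow> nat \<Rightarrow> real" where
  "mem_FDR M d \<theta> \<delta> t =
     integral\<^sup>L M (\<lambda>\<omega>. (\<Sum>j\<in>H0 \<theta> t. d ^ (t - j) * \<delta> j \<omega>) / decay_R d \<delta> t \<omega>)"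

definition mem_FDP_star :: "real \<Rightarrow> (nat \<Rightarrow> nat) \<Rightarrow> (nat \<Rightarrow> 'a \<Rightarrow> real) \<Rightarrow> (nat \<Rightarrow> 'a \<Rightarrow> real) \<Rightarrow> nat \<Rightarrow> 'a \<Rightarrow> real" where
  "mem_FDP_star d \<theta> alpha \<delta> t \<omega> =
     (\<Sum>j\<in>H0 \<theta> t. alpha j \<omega> / (d * decay_R d \<delta> (j - 1) \<omega> + 1))"

end

theory Submission imports Defs begin

lemma decay_step: "decay_R d \<delta> (Suc k) \<omega> = d * decay_R d \<delta> k \<omega> + \<delta> (Suc k) \<omega>"
proof -
  have "decay_R d \<delta> (Suc k) \<omega> = (\<Sum>i=1..k. d ^ (Suc k - i) * \<delta> i \<omega>) + \<delta> (Suc k) \<omega>"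
    unfolding decay_R_def by simp
  also have "(\<Sum>i=1..k. d ^ (Suc k - i) * \<delta> i \<omega>) = d * decay_R d \<delta> k \<omega>"
    unfolding decay_R_def sum_distrib_left
    by (rule sum.cong) (auto simp: Suc_diff_le)
  finally show ?thesis .
qed

lemma decay_nonneg: "0 \<le> d \<Longrightarrow> (\<And>i. 0 \<le> \<delta> i \<omega>) \<Longrightarrow> 0 \<le> decay_R d \<delta> k \<omega>"
  unfolding decay_R_def by (intro sum_nonneg) auto

lemma decay_mono:
  assumes "0 \<le> d" "\<And>i. 0 \<le> \<delta> i \<omega>" "j \<le> t"
  shows "d ^ (t - j) * decay_R d \<delta> j \<omega> \<le> decay_R d \<delta> t \<omega>"
  using assms(3)
proof (induction t rule: dec_induct)
  case base then show ?case by simp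
next
  case (step n)
  have "d ^ (Suc n - j) * decay_R d \<delta> j \<omega> = d * (d ^ (n - j) * decay_R d \<delta> j \<omega>)"
    using step(1) by (simp add: Suc_diff_le)
  also have "\<dots> \<le> d * decay_R d \<delta> n \<omega>" using step(3) assms(1) by (simp add: mult_left_mono)
  also have "\<dots> \<le> decay_R d \<delta> (Suc n) \<omega>" using assms(2) by (simp add: decay_step)
  finally show ?case .
qed

lemma pointwise:
  assumes "0 < d" "\<And>i. \<delta> i \<omega> \<in> {0,1}" "1 \<le> j" "j \<le> t"
  shows "d ^ (t - j) * \<delta> j \<omega> / decay_R d \<delta> t \<omega> \<le> \<delta> j \<omega> / (d * decay_R d \<delta> (j - 1) \<omega> + 1)"
proof -
  have nn: "\<And>i. 0 \<le> \<delta> i \<omega>" using assms(2) by (metis empty_iff insert_iff order_refl zero_le_one)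
  have R0: "0 \<le> decay_R d \<delta> (j - 1) \<omega>" by (rule decay_nonneg) (use assms nn in auto)
  show ?thesis
  proof (cases "\<delta> j \<omega> = 0")
    case True then show ?thesis by simp
  next
    case False
    then have d1: "\<delta> j \<omega> = 1" using assms(2) by blast
    have Rj: "decay_R d \<delta> j \<omega> = d * decay_R d \<delta> (j - 1) \<omega> + 1"
      using decay_step[of d \<delta> "j - 1" \<omega>] assms(3) d1 by simp
    have pos: "0 < d * decay_R d \<delta> (j - 1) \<omega> + 1" using R0 assms(1) by (simp add: add_nonneg_pos)
    have dp: "0 < d ^ (t - j)" using assms(1) by simp
    have le: "d ^ (t - j) * (d * decay_R d \<delta> (j - 1) \<omega> + 1) \<le> decay_R d \<delta> t \<omega>"
      using decay_mono[of d \<delta> \<omega> j t] assms nn Rj by simp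
    have "0 < decay_R d \<delta> t \<omega>" using le dp pos by (smt (verit) mult_pos_pos)
    then show ?thesis using d1 le pos dp by (simp add: divide_simps mult.commute)
  qed
qed


lemma filt_props:
  assumes "\<And>i. i \<in> {1..n} \<Longrightarrow> \<delta> i \<in> borel_measurable M"
  shows "sets (dec_filtration M \<delta> n) \<subseteq> sets M"
    and "space (dec_filtration M \<delta> n) = space M"
    and "\<And>i. i \<in> {1..n} \<Longrightarrow> \<delta> i \<in> borel_measurable (dec_filtration M \<delta> n)"
proof -
  let ?G = "{\<delta> j -` A \<inter> space M | j A. j \<in> {1..n} \<and> A \<in> sets (borel :: real measure)}"
  have G: "?G \<subseteq> Pow (space M)" by auto
  show sp: "space (dec_filtration M \<delta> n) = space M"
    unfolding dec_filtration_def by (simp add: space_measure_of_conv)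
  have GM: "?G \<subseteq> sets M" using assms by (auto intro: measurable_sets)
  show "sets (dec_filtration M \<delta> n) \<subseteq> sets M"
    unfolding dec_filtration_def using G GM
    by (simp add: sets_measure_of sets.sigma_sets_subset)
  fix i assume i: "i \<in> {1..n}"
  show "\<delta> i \<in> borel_measurable (dec_filtration M \<delta> n)"
  proof (rule measurableI)
    fix x assume "x \<in> space (dec_filtration M \<delta> n)" then show "\<delta> i x \<in> space borel" by simp
  next
    fix A :: "real set" assume "A \<in> sets borel"
    then have "\<delta> i -` A \<inter> space M \<in> ?G" using i by blast
    then show "\<delta> i -` A \<inter> space (dec_filtration M \<delta> n) \<in> sets (dec_filtration M \<delta> n)"
      unfolding sp unfolding dec_filtration_def using G by (simp add: sets_measure_of)
  qed
qed

lemma decay_meas: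
  assumes "\<And>i. i \<in> {1..k} \<Longrightarrow> \<delta> i \<in> borel_measurable N"
  shows "decay_R d \<delta> k \<in> borel_measurable N"
proof -
  have "decay_R d \<delta> k = (\<lambda>\<omega>. \<Sum>i=1..k. d ^ (k - i) * \<delta> i \<omega>)" by (rule ext) (simp add: decay_R_def)
  then show ?thesis using assms by (auto intro!: borel_measurable_sum borel_measurable_times)
qed

lemma decision_meas:
  assumes "p i \<in> borel_measurable M" "alpha i \<in> borel_measurable M"
  shows "decision p alpha i \<in> borel_measurable M"
proof -
  have "decision p alpha i = (\<lambda>\<omega>. if p i \<omega> \<le> alpha i \<omega> then 1 else 0)" by (rule ext) (simp add: decision_def)
  then show ?thesis using assms by simp
qed


lemma bnd: "0 \<le> a \<Longrightarrow> a \<le> 1 \<Longrightarrow> 0 \<le> b \<Longrightarrow> b \<le> 1 \<Longrightarrow> norm (a * b :: real) \<le> 1"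
  by (simp add: abs_mult mult_le_one)

theorem theorem4:
  fixes M :: "'a measure"
    and p alpha :: "nat \<Rightarrow> 'a \<Rightarrow> real"
    and \<theta> :: "nat \<Rightarrow> nat"
    and \<alpha> d :: real
    and t :: nat
  assumes "prob_space M"
    and "\<alpha> \<in> {0<..<1}"
    and "d \<in> {0<..1}"
    and theta01: "\<And>j. \<theta> j \<in> {0, 1}"
    and p_meas: "\<And>j. p j \<in> borel_measurable M"
    and p_range: "\<And>j \<omega>. \<omega> \<in> space M \<Longrightarrow> p j \<omega> \<in> {0..1}"
    and alpha_range: "\<And>j \<omega>. \<omega> \<in> space M \<Longrightarrow> alpha j \<omega> \<in> {0..1}"
    and alpha_pred: "\<And>j. j \<ge> 1 \<Longrightarrow>
           alpha j \<in> borel_measurable (dec_filtration M (decision p alpha) (j - 1))"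
    and super_uniform: "\<And>j U. j \<ge> 1 \<Longrightarrow> \<theta> j = 0 \<Longrightarrow>
           U \<in> borel_measurable (dec_filtration M (decision p alpha) (j - 1)) \<Longrightarrow>
           (\<forall>\<omega>\<in>space M. U \<omega> \<in> {0..1}) \<Longrightarrow>
           AE \<omega> in M. real_cond_exp M (dec_filtration M (decision p alpha) (j - 1))
                         (\<lambda>x. indicator {y \<in> space M. p j y \<le> U y} x) \<omega> \<le> U \<omega>"
    and "t \<ge> 1"
    and "integral\<^sup>L M (mem_FDP_star d \<theta> alpha (decision p alpha) t) \<le> \<alpha>"
  shows "mem_FDR M d \<theta> (decision p alpha) t \<le> \<alpha>"
proof -
  interpret P: prob_space M by fact
  define \<delta> where "\<delta> = decision p alpha"
  define F where "F j = dec_filtration M \<delta> j" for j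
  have d: "0 < d" "d \<le> 1" using assms(3) by auto
  have d01: "\<delta> i \<omega> \<in> {0,1}" for i \<omega> unfolding \<delta>_def decision_def by auto
  have dnn: "0 \<le> \<delta> i \<omega>" for i \<omega> using d01[of i \<omega>] by auto
  have dle: "\<delta> i \<omega> \<le> 1" for i \<omega> using d01[of i \<omega>] by auto
  have dmeas_all: "\<forall>i\<in>{1..n}. \<delta> i \<in> borel_measurable M" for n
  proof (induction n)
    case 0 then show ?case by simp
  next
    case (Suc n)
    have "sets (F n) \<subseteq> sets M" "space (F n) = space M"
      using filt_props[of n \<delta> M] Suc.IH unfolding F_def by auto
    then have sub: "subalgebra M (F n)" unfolding subalgebra_def by auto
    have "alpha (Suc n) \<in> borel_measurable M"
      using measurable_from_subalg[OF sub] alpha_pred[of "Suc n"] unfolding F_def \<delta>_def by simp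
    then have "\<delta> (Suc n) \<in> borel_measurable M" unfolding \<delta>_def using decision_meas p_meas by blast
    then show ?case using Suc.IH by (auto simp: le_Suc_eq)
  qed
  have dmeas: "\<delta> i \<in> borel_measurable M" if "1 \<le> i" for i using dmeas_all[of i] that by auto
  have Rmeas: "decay_R d \<delta> k \<in> borel_measurable M" for k by (rule decay_meas) (use dmeas in auto)
  have Rnn: "0 \<le> decay_R d \<delta> k \<omega>" for k \<omega> using decay_nonneg[of d \<delta> \<omega> k] d dnn by auto
  define w where "w j \<omega> = 1 / (d * decay_R d \<delta> (j - 1) \<omega> + 1)" for j \<omega>
  have wpos: "0 < w j \<omega>" for j \<omega> unfolding w_def using Rnn[of "j-1" \<omega>] d
    by (smt (verit) divide_pos_pos mult_nonneg_nonneg)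
  have wle: "w j \<omega> \<le> 1" for j \<omega>
  proof -
    have "1 \<le> d * decay_R d \<delta> (j - 1) \<omega> + 1" using Rnn[of "j-1" \<omega>] d by simp
    then show ?thesis unfolding w_def by simp
  qed
  have wmeasM: "w j \<in> borel_measurable M" for j unfolding w_def using Rmeas by measurable
  have key: "integral\<^sup>L M (\<lambda>\<omega>. \<delta> j \<omega> * w j \<omega>) \<le> integral\<^sup>L M (\<lambda>\<omega>. alpha j \<omega> * w j \<omega>)"
    if j: "j \<in> H0 \<theta> t" for j
  proof -
    have j1: "1 \<le> j" and th: "\<theta> j = 0" using j unfolding H0_def by auto
    have Fs: "sets (F (j-1)) \<subseteq> sets M" "space (F (j-1)) = space M"
      using filt_props[of "j-1" \<delta> M] dmeas unfolding F_def by auto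
    then have sub: "subalgebra M (F (j-1))" unfolding subalgebra_def by auto
    interpret S: sigma_finite_subalgebra M "F (j-1)"
      by (rule finite_measure_subalgebra_is_sigma_finite)
         (use sub in \<open>simp add: finite_measure_subalgebra_axioms_def finite_measure_subalgebra_def P.finite_measure_axioms\<close>)
    have dF: "\<delta> i \<in> borel_measurable (F (j-1))" if "i \<in> {1..j-1}" for i
      using filt_props(3)[of "j-1" \<delta> M i] dmeas that unfolding F_def by auto
    have RF: "decay_R d \<delta> (j-1) \<in> borel_measurable (F (j-1))" by (rule decay_meas) (use dF in auto)
    have wF: "w j \<in> borel_measurable (F (j-1))" unfolding w_def using RF by measurable
    have aF: "alpha j \<in> borel_measurable (F (j-1))" using alpha_pred[OF j1] unfolding F_def \<delta>_def .
    let ?I = "\<lambda>x. indicator {y \<in> space M. p j y \<le> alpha j y} x :: real"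
    have AE: "AE \<omega> in M. real_cond_exp M (F (j-1)) ?I \<omega> \<le> alpha j \<omega>"
      using super_uniform[OF j1 th aF[unfolded F_def \<delta>_def]] alpha_range unfolding F_def \<delta>_def by auto
    have Ieq: "?I \<omega> = \<delta> j \<omega>" if "\<omega> \<in> space M" for \<omega>
      using that unfolding \<delta>_def decision_def by (auto simp: indicator_def)
    have Imeas: "?I \<in> borel_measurable M"
      using measurable_cong[of M ?I "\<delta> j", OF Ieq] dmeas[OF j1] by simp
    have intI: "integrable M (\<lambda>\<omega>. w j \<omega> * ?I \<omega>)"
    proof (rule P.integrable_const_bound[where B=1])
      show "AE x in M. norm (w j x * ?I x) \<le> 1"
        using wpos wle by (intro AE_I2 bnd) (auto simp: indicator_def intro: less_imp_le)
      show "(\<lambda>\<omega>. w j \<omega> * ?I \<omega>) \<in> borel_measurable M" using Imeas wmeasM by measurable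
    qed
    have IF: "?I \<in> borel_measurable M" by (rule Imeas)
    have ce: "integrable M (\<lambda>x. w j x * real_cond_exp M (F (j-1)) ?I x)"
      "(\<integral> x. w j x * real_cond_exp M (F (j-1)) ?I x \<partial>M) = (\<integral> x. w j x * ?I x \<partial>M)"
      using S.real_cond_exp_intg[OF intI wF IF] by auto
    have intA: "integrable M (\<lambda>\<omega>. w j \<omega> * alpha j \<omega>)"
    proof (rule P.integrable_const_bound[where B=1])
      show "AE x in M. norm (w j x * alpha j x) \<le> 1"
        using wpos wle alpha_range by (intro AE_I2 bnd) (auto intro: less_imp_le)
      show "(\<lambda>\<omega>. w j \<omega> * alpha j \<omega>) \<in> borel_measurable M"
        using measurable_from_subalg[OF sub aF] wmeasM by measurable
    qed
    have "integral\<^sup>L M (\<lambda>\<omega>. \<delta> j \<omega> * w j \<omega>) = (\<integral> x. w j x * ?I x \<partial>M)"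
      by (rule Bochner_Integration.integral_cong) (auto simp: Ieq)
    also have "\<dots> = (\<integral> x. w j x * real_cond_exp M (F (j-1)) ?I x \<partial>M)" using ce(2) by simp
    also have "\<dots> \<le> (\<integral> x. w j x * alpha j x \<partial>M)"
      apply (rule integral_mono_AE[OF ce(1) intA])
      using AE by eventually_elim (use wpos in \<open>auto intro: mult_left_mono less_imp_le\<close>)
    also have "\<dots> = integral\<^sup>L M (\<lambda>\<omega>. alpha j \<omega> * w j \<omega>)" by (simp add: mult.commute)
    finally show ?thesis .
  qed
  have H0sub: "H0 \<theta> t \<subseteq> {1..t}" unfolding H0_def by auto
  have finH: "finite (H0 \<theta> t)" using H0sub finite_subset by blast
  have alphaM: "alpha j \<in> borel_measurable M" if "1 \<le> j" for j
  proof -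
    have "sets (F (j-1)) \<subseteq> sets M" "space (F (j-1)) = space M"
      using filt_props[of "j-1" \<delta> M] dmeas unfolding F_def by auto
    then have sub: "subalgebra M (F (j-1))" unfolding subalgebra_def by auto
    show ?thesis using measurable_from_subalg[OF sub] alpha_pred[OF that] unfolding F_def \<delta>_def by simp
  qed
  have int_dw: "integrable M (\<lambda>\<omega>. \<delta> j \<omega> * w j \<omega>)" if "1 \<le> j" for j
  proof (rule P.integrable_const_bound[where B=1])
    show "AE x in M. norm (\<delta> j x * w j x) \<le> 1"
      using wpos wle dnn dle by (intro AE_I2 bnd) (auto intro: less_imp_le)
    show "(\<lambda>\<omega>. \<delta> j \<omega> * w j \<omega>) \<in> borel_measurable M" using dmeas[OF that] wmeasM by measurable
  qed
  have int_aw: "integrable M (\<lambda>\<omega>. alpha j \<omega> * w j \<omega>)" if "1 \<le> j" for j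
  proof (rule P.integrable_const_bound[where B=1])
    show "AE x in M. norm (alpha j x * w j x) \<le> 1"
      using wpos wle alpha_range by (intro AE_I2 bnd) (auto intro: less_imp_le)
    show "(\<lambda>\<omega>. alpha j \<omega> * w j \<omega>) \<in> borel_measurable M" using alphaM[OF that] wmeasM by measurable
  qed
  have pw: "d ^ (t - j) * \<delta> j \<omega> / decay_R d \<delta> t \<omega> \<le> \<delta> j \<omega> * w j \<omega>" if "j \<in> H0 \<theta> t" for j \<omega>
    using pointwise[of d \<delta> \<omega> j t] d d01 that H0sub unfolding w_def by auto
  have int_l: "integrable M (\<lambda>\<omega>. d ^ (t - j) * \<delta> j \<omega> / decay_R d \<delta> t \<omega>)" if "j \<in> H0 \<theta> t" for j
  proof (rule P.integrable_const_bound[where B=1])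
    have "1 \<le> j" using that H0sub by auto
    show "AE x in M. norm (d ^ (t - j) * \<delta> j x / decay_R d \<delta> t x) \<le> 1"
    proof (rule AE_I2)
      fix x
      have "0 \<le> d ^ (t - j) * \<delta> j x / decay_R d \<delta> t x" using d dnn Rnn by simp
      moreover have "\<delta> j x * w j x \<le> 1" using wpos[of j x] wle[of j x] dnn[of j x] dle[of j x] by (simp add: mult_le_one)
      ultimately show "norm (d ^ (t - j) * \<delta> j x / decay_R d \<delta> t x) \<le> 1" using pw[OF that, of x] by simp
    qed
    show "(\<lambda>\<omega>. d ^ (t - j) * \<delta> j \<omega> / decay_R d \<delta> t \<omega>) \<in> borel_measurable M"
      using dmeas[OF \<open>1 \<le> j\<close>] Rmeas by measurable
  qed
  have "mem_FDR M d \<theta> (decision p alpha) t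
      = integral\<^sup>L M (\<lambda>\<omega>. \<Sum>j\<in>H0 \<theta> t. d ^ (t - j) * \<delta> j \<omega> / decay_R d \<delta> t \<omega>)"
    unfolding mem_FDR_def \<delta>_def by (simp add: sum_divide_distrib)
  also have "\<dots> \<le> integral\<^sup>L M (\<lambda>\<omega>. \<Sum>j\<in>H0 \<theta> t. \<delta> j \<omega> * w j \<omega>)"
  proof (rule integral_mono)
    show "integrable M (\<lambda>\<omega>. \<Sum>j\<in>H0 \<theta> t. d ^ (t - j) * \<delta> j \<omega> / decay_R d \<delta> t \<omega>)"
      by (rule Bochner_Integration.integrable_sum) (rule int_l)
    show "integrable M (\<lambda>\<omega>. \<Sum>j\<in>H0 \<theta> t. \<delta> j \<omega> * w j \<omega>)"
      by (rule Bochner_Integration.integrable_sum) (use int_dw H0sub in force)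
    show "(\<Sum>j\<in>H0 \<theta> t. d ^ (t - j) * \<delta> j \<omega> / decay_R d \<delta> t \<omega>) \<le> (\<Sum>j\<in>H0 \<theta> t. \<delta> j \<omega> * w j \<omega>)" for \<omega>
      by (rule sum_mono) (rule pw)
  qed
  also have "\<dots> = (\<Sum>j\<in>H0 \<theta> t. integral\<^sup>L M (\<lambda>\<omega>. \<delta> j \<omega> * w j \<omega>))"
    by (rule Bochner_Integration.integral_sum) (use int_dw H0sub in force)
  also have "\<dots> \<le> (\<Sum>j\<in>H0 \<theta> t. integral\<^sup>L M (\<lambda>\<omega>. alpha j \<omega> * w j \<omega>))"
    by (rule sum_mono) (rule key)
  also have "\<dots> = integral\<^sup>L M (\<lambda>\<omega>. \<Sum>j\<in>H0 \<theta> t. alpha j \<omega> * w j \<omega>)"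
    by (rule Bochner_Integration.integral_sum[symmetric]) (use int_aw H0sub in force)
  also have "\<dots> = integral\<^sup>L M (mem_FDP_star d \<theta> alpha (decision p alpha) t)"
    unfolding mem_FDP_star_def w_def \<delta>_def by simp
  also have "\<dots> \<le> \<alpha>" by fact
  finally show ?thesis .
qed

end
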